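(* Let $X\subseteq S^1$ and $0<r\le r'<\frac12$. The (non-continuous) map $\eta:S^1\to S^1$, $\eta(y)=\frac{1+2r}{1+2r'}\,y$ for $y\in[0,1)$, maps $T_r(X)$ into $T_{r'}(X)$ and determines a simplicial map $$\eta:\mathbf{VR}_{\le}\Big(T_r(X);\tfrac{2r}{1+2r}\Big)\to\mathbf{VR}_{\le}\Big(T_{r'}(X);\tfrac{2r'}{1+2r'}\Big)$$ such that $\pi_{r'}\circ\eta=\pi_r$; that is, the square formed by $\eta$, the simplicial homotopy equivalences $\pi_r:\mathbf{VR}_{\le}(T_r(X);\frac{2r}{1+2r})\to\check{\mathbf C}_{\le}(X;r)$ and $\pi_{r'}:\mathbf{VR}_{\le}(T_{r'}(X);\frac{2r'}{1+2r'})\to\check{\mathbf C}_{\le}(X;r')$, and the inclusion $\check{\mathbf C}_{\le}(X;r)\subseteq\check{\mathbf C}_{\le}(X;r')$ commutes.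
   Context: $S^1$ is the circle of circumference $1$ with arc-length metric; points are identified with numbers in $[0,1)$, and $aX+b=\{(ax+b)\bmod1:x\in X\}$. For $0<s<\frac12$, $T_s(X)=\frac{1}{1+2s}X\cup\big(\frac{1}{1+2s}(X\cap[0,2s)_{S^1})+\frac{1}{1+2s}\big)$ and $\pi_s(y)=(1+2s)y\bmod 1$ for $y\in[0,1)$; $\pi_s$ induces a simplicial homotopy equivalence $\mathbf{VR}_{\le}(T_s(X);\frac{2s}{1+2s})\to\check{\mathbf C}_{\le}(X;s)$. $\mathbf{VR}_{\le}(Y;t)$ is the Vietoris–Rips complex on $Y$ (faces: finite subsets of diameter $\le t$), and $\check{\mathbf C}_{\le}(X;s)$ is the Čech complex on $X$ (faces: finite subsets contained in some closed arc of length $2s$, i.e. whose closed $s$-balls in $S^1$ have a common point). *)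

theory Defs
  imports "HOL-Analysis.Analysis"
begin

text \<open>Points of the circle S^1 (circumference 1) are represented by reals in [0,1).
  Reduction mod 1 is frac.\<close>

definition circ_dist :: "real \<Rightarrow> real \<Rightarrow> real" where
  "circ_dist x y = min (frac (x - y)) (frac (y - x))"

definition affine_circ :: "real \<Rightarrow> real \<Rightarrow> real set \<Rightarrow> real set" where
  "affine_circ a b X = (\<lambda>x. frac (a * x + b)) ` X"

definition arc0 :: "real \<Rightarrow> real set" where
  "arc0 s = {x. 0 \<le> x \<and> x < 2 * s}"

definition T_map :: "real \<Rightarrow> real set \<Rightarrow> real set" where
  "T_map s X = affine_circ (1 / (1 + 2 * s)) 0 X
     \<union> affine_circ (1 / (1 + 2 * s)) (1 / (1 + 2 * s)) (X \<inter> arc0 s)"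

definition pi_map :: "real \<Rightarrow> real \<Rightarrow> real" where
  "pi_map s y = frac ((1 + 2 * s) * y)"

definition VR_le :: "real set \<Rightarrow> real \<Rightarrow> real set set" where
  "VR_le Y t = {\<sigma>. \<sigma> \<subseteq> Y \<and> finite \<sigma> \<and> \<sigma> \<noteq> {} \<and> (\<forall>a\<in>\<sigma>. \<forall>b\<in>\<sigma>. circ_dist a b \<le> t)}"

definition Cech_le :: "real set \<Rightarrow> real \<Rightarrow> real set set" where
  "Cech_le X s = {\<sigma>. \<sigma> \<subseteq> X \<and> finite \<sigma> \<and> \<sigma> \<noteq> {} \<and>
      (\<exists>c. 0 \<le> c \<and> c < 1 \<and> (\<forall>x\<in>\<sigma>. circ_dist x c \<le> s))}"

definition eta_map :: "real \<Rightarrow> real \<Rightarrow> real \<Rightarrow> real" where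
  "eta_map r r' y = (1 + 2 * r) / (1 + 2 * r') * y"

end

theory Submission
  imports Defs
begin

lemma frac_neg: "0 < d \<Longrightarrow> d < 1 \<Longrightarrow> frac (- d) = 1 - d"
proof -
  assume "0 < d" "d < 1"
  then have "floor (-d) = -1" by (simp add: floor_eq_iff)
  then show ?thesis by (simp add: frac_def)
qed

lemma cd_le: "0\<le>y \<Longrightarrow> y<1 \<Longrightarrow> 0\<le>z \<Longrightarrow> z<1 \<Longrightarrow> z\<le>y \<Longrightarrow>
   circ_dist y z = (if y=z then 0 else min (y-z) (1-(y-z)))"
  unfolding circ_dist_def
  using frac_neg[of "y-z"] by (auto simp: frac_eq)

lemma cancelA: "(A::real) \<noteq> 0 \<Longrightarrow> A/B*(x/A) = x/B" by (simp add: field_simps)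

lemma cd_sym: "circ_dist y z = circ_dist z y"
  unfolding circ_dist_def by simp

lemma key0:
  fixes r r' c y z :: real
  assumes r: "0 < r" "r \<le> r'" "r' < 1/2" and c: "c = (1+2*r)/(1+2*r')"
    and y: "0\<le>y" "y<1" and z: "0\<le>z" "z<1" and zy: "z\<le>y"
    and d: "circ_dist y z \<le> 2*r/(1+2*r)"
  shows "circ_dist (c*y) (c*z) \<le> 2*r'/(1+2*r')"
proof -
  have c0a: "0 < c" unfolding c using r by (intro divide_pos_pos) auto
  have c0b: "c \<le> 1" unfolding c using r by (subst divide_le_eq_1_pos) auto
  note c0 = c0a c0b
  have cy1: "c*y \<le> 1*y" using c0 y by (intro mult_right_mono) auto
  have cy: "0 \<le> c*y" "c*y < 1" using c0 y cy1 by auto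
  have cz1: "c*z \<le> 1*z" using c0 z by (intro mult_right_mono) auto
  have cz: "0 \<le> c*z" "c*z < 1" using c0 z cz1 by auto
  have czy: "c*z \<le> c*y" using c0 zy by simp
  show ?thesis
  proof (cases "y = z")
    case True
    then show ?thesis using cd_le[OF cy cz czy] r by simp
  next
    case False
    then have ne: "c*y \<noteq> c*z" using c0 by simp
    have dd: "min (y-z) (1-(y-z)) \<le> 2*r/(1+2*r)" using d cd_le[OF y z zy] False by simp
    have e: "circ_dist (c*y) (c*z) = min (c*(y-z)) (1 - c*(y-z))"
      using cd_le[OF cy cz czy] ne by (simp add: algebra_simps)
    show ?thesis
    proof (cases "y - z \<le> 2*r/(1+2*r)")
      case True
      then have "c*(y-z) \<le> c*(2*r/(1+2*r))" using c0 by (intro mult_left_mono) auto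
      also have "\<dots> = 2*r/(1+2*r')" unfolding c using r cancelA[of "1+2*r" "1+2*r'" "2*r"] by simp
      also have "\<dots> \<le> 2*r'/(1+2*r')" using r by (simp add: divide_right_mono)
      finally show ?thesis using e by simp
    next
      case False
      then have "1 - (y-z) \<le> 2*r/(1+2*r)" using dd by simp
      then have "y - z \<ge> 1/(1+2*r)" using r by (simp add: field_simps)
      then have "c*(y-z) \<ge> c*(1/(1+2*r))" using c0 by (intro mult_left_mono) auto
      moreover have "c*(1/(1+2*r)) = 1/(1+2*r')" unfolding c using r cancelA[of "1+2*r" "1+2*r'" "1"] by simp
      moreover have "1 - 1/(1+2*r') = 2*r'/(1+2*r')" using r by (simp add: field_simps)
      ultimately show ?thesis using e by linarith
    qed
  qed
qed

lemma key:
  fixes r r' c y z :: real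
  assumes r: "0 < r" "r \<le> r'" "r' < 1/2" and c: "c = (1+2*r)/(1+2*r')"
    and y: "0\<le>y" "y<1" and z: "0\<le>z" "z<1"
    and d: "circ_dist y z \<le> 2*r/(1+2*r)"
  shows "circ_dist (c*y) (c*z) \<le> 2*r'/(1+2*r')"
proof (cases "z \<le> y")
  case True then show ?thesis using key0[OF r c y z True d] by simp
next
  case False
  then have yz: "y \<le> z" by simp
  have "circ_dist z y \<le> 2*r/(1+2*r)" using d cd_sym[of y z] by simp
  then have "circ_dist (c*z) (c*y) \<le> 2*r'/(1+2*r')" using key0[OF r c z y yz] by blast
  then show ?thesis using cd_sym[of "c*z" "c*y"] by simp
qed

lemma T_sub:
  assumes "X \<subseteq> {0..<1}" "0 < s" "s < 1/2"
  shows "T_map s X = (\<lambda>x. x/(1+2 * s)) ` X \<union> (\<lambda>x. x/(1+2 * s) + 1/(1+2 * s)) ` (X \<inter> arc0 s)"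
proof -
  have p: "1 + 2 * s > 0" using assms by simp
  have A: "frac (1/(1+2 * s) * x + 0) = x/(1+2 * s)" if "x \<in> X" for x
  proof -
    have "0 \<le> x" "x < 1" using that assms by auto
    then have "0 \<le> x/(1+2 * s)" "x/(1+2 * s) < 1" using p assms by (auto simp: field_simps)
    then show ?thesis by (simp add: frac_eq)
  qed
  have B: "frac (1/(1+2 * s) * x + 1/(1+2 * s)) = x/(1+2 * s) + 1/(1+2 * s)" if "x \<in> X \<inter> arc0 s" for x
  proof -
    have "0 \<le> x" "x < 2 * s" using that assms by (auto simp: arc0_def)
    then have "0 \<le> x/(1+2 * s) + 1/(1+2 * s)" "x/(1+2 * s) + 1/(1+2 * s) < 1" using p assms
      by (auto simp: field_simps)
    then show ?thesis by (simp add: frac_eq)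
  qed
  show ?thesis unfolding T_map_def affine_circ_def
    using A B by (auto simp: image_iff)
qed

theorem proposition9p5:
  fixes X :: "real set" and r r' :: real
  assumes "X \<subseteq> {0..<1}"
    and "0 < r" and "r \<le> r'" and "r' < 1/2"
  shows "eta_map r r' ` T_map r X \<subseteq> T_map r' X \<and>
    (\<forall>\<sigma>\<in>VR_le (T_map r X) (2 * r / (1 + 2 * r)).
           eta_map r r' ` \<sigma> \<in> VR_le (T_map r' X) (2 * r' / (1 + 2 * r'))) \<and>
    (\<forall>y\<in>T_map r X. pi_map r' (eta_map r r' y) = pi_map r y) \<and>
    Cech_le X r \<subseteq> Cech_le X r'"
proof -
  have r: "0 < r" "r \<le> r'" "r' < 1/2" using assms by auto
  have Tr: "T_map r X = (\<lambda>x. x/(1+2*r)) ` X \<union> (\<lambda>x. x/(1+2*r) + 1/(1+2*r)) ` (X \<inter> arc0 r)"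
    using T_sub assms by auto
  have Tr': "T_map r' X = (\<lambda>x. x/(1+2*r')) ` X \<union> (\<lambda>x. x/(1+2*r') + 1/(1+2*r')) ` (X \<inter> arc0 r')"
    using T_sub assms by auto
  have arc: "X \<inter> arc0 r \<subseteq> X \<inter> arc0 r'" using r by (auto simp: arc0_def)
  have p: "1+2*r > 0" "1+2*r' > 0" using r by auto
  have e1: "eta_map r r' (x/(1+2*r)) = x/(1+2*r')" for x
  proof -
    have "1+2*r \<noteq> 0" using p by simp
    then show ?thesis unfolding eta_map_def using cancelA[of "1+2*r" "1+2*r'" x] by simp
  qed
  have e2: "eta_map r r' (x/(1+2*r) + 1/(1+2*r)) = x/(1+2*r') + 1/(1+2*r')" for x
  proof -
    have "1+2*r \<noteq> 0" using p by simp
    then have "(1+2*r)/(1+2*r') * ((x+1)/(1+2*r)) = (x+1)/(1+2*r')" using cancelA by blast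
    then show ?thesis unfolding eta_map_def by (simp add: add_divide_distrib)
  qed
  have P1: "eta_map r r' ` T_map r X \<subseteq> T_map r' X"
    unfolding Tr Tr' using arc by (auto simp: e1 e2)
  have inT: "0 \<le> y \<and> y < 1" if "y \<in> T_map r X" for y
    using that unfolding T_map_def affine_circ_def by (auto simp: frac_lt_1)
  have P2: "\<forall>\<sigma>\<in>VR_le (T_map r X) (2 * r / (1 + 2 * r)).
           eta_map r r' ` \<sigma> \<in> VR_le (T_map r' X) (2 * r' / (1 + 2 * r'))"
  proof
    fix \<sigma> assume s: "\<sigma> \<in> VR_le (T_map r X) (2 * r / (1 + 2 * r))"
    have D: "circ_dist a b \<le> 2 * r' / (1 + 2 * r')" if ab: "a \<in> eta_map r r' ` \<sigma>" "b \<in> eta_map r r' ` \<sigma>" for a b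
    proof -
      obtain y z where "y \<in> \<sigma>" "z \<in> \<sigma>" "a = eta_map r r' y" "b = eta_map r r' z"
        using ab by auto
      moreover have "y \<in> T_map r X" "z \<in> T_map r X" using s calculation by (auto simp: VR_le_def)
      ultimately show ?thesis using key[OF r refl, of y z] inT[of y] inT[of z] s
        unfolding VR_le_def eta_map_def by blast
    qed
    show "eta_map r r' ` \<sigma> \<in> VR_le (T_map r' X) (2 * r' / (1 + 2 * r'))"
    proof -
      have "eta_map r r' ` \<sigma> \<subseteq> T_map r' X" using s P1 by (auto simp: VR_le_def)
      then show ?thesis using s D by (auto simp: VR_le_def)
    qed
  qed
  have P3: "\<forall>y\<in>T_map r X. pi_map r' (eta_map r r' y) = pi_map r y"
    using p by (simp add: pi_map_def eta_map_def)
  have P4: "Cech_le X r \<subseteq> Cech_le X r'"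
    unfolding Cech_le_def using r by fastforce
  show ?thesis using P1 P2 P3 P4 by blast
qed

end
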